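(* Let $\mathcal Z$ be a finite zero-set and $a,b\in\{1,2,\dots\}\cup\{\infty\}$. If $A'$ spans for the zero-set $\mathcal Z\cap R_{a,b}$, then there exists $A\supseteq A'$ which spans for $\mathcal Z$ and satisfies $|A|=|A'|+|\mathcal Z\setminus R_{a,b}|$; moreover, if $A'$ is thin, $A$ can be chosen thin. Consequently $$\gamma(\mathcal Z\cap R_{a,b})\ge\gamma(\mathcal Z)-|\mathcal Z\setminus R_{a,b}|,\qquad \gamma_{\rm thin}(\mathcal Z\cap R_{a,b})\ge\gamma_{\rm thin}(\mathcal Z)-|\mathcal Z\setminus R_{a,b}|.$$
   Context: $\mathbb Z_+=\{0,1,2,\dots\}$, $R_{a,b}=([0,a-1]\times[0,b-1])\cap\mathbb Z_+^2$, where $[0,\infty-1]$ means $[0,\infty)$. A zero-set is a union of rectangles $R_{a,b}$. $\mathrm{row}(x,A),\mathrm{col}(x,A)$ count the points of $A$ on the horizontal/vertical line through $x$; for a zero-set $\mathcal Z$, $\mathcal T(A)=A\cup\{x\notin A:(\mathrm{row}(x,A),\mathrm{col}(x,A))\notin\mathcal Z\}$; $A$ spans for $\mathcal Z$ if $\bigcup_t\mathcal T^t(A)=\mathbb Z_+^2$; $\gamma(\mathcal Z)$ is the minimal size of a finite spanning set. A set is thin if each of its points has no other point of the set on its horizontal line or no other point of the set on its vertical line; $\gamma_{\rm thin}(\mathcal Z)$ is the minimal size of a thin spanning set. *)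

theory Defs
  imports Main "HOL-Library.Extended_Nat"
begin

type_synonym point = "nat \<times> nat"

definition rect :: "enat \<Rightarrow> enat \<Rightarrow> point set" where
  "rect a b = {(i, j). enat i < a \<and> enat j < b}"

definition zero_set :: "point set \<Rightarrow> bool" where
  "zero_set Z \<longleftrightarrow> (\<exists>S. (\<forall>(a, b) \<in> S. 1 \<le> a \<and> 1 \<le> b) \<and>
      Z = (\<Union>(a, b) \<in> S. rect a b))"

definition ecount :: "'a set \<Rightarrow> enat" where
  "ecount S = (if finite S then enat (card S) else \<infinity>)"

definition row :: "point \<Rightarrow> point set \<Rightarrow> enat" where
  "row x A = ecount {y \<in> A. snd y = snd x}"

definition col :: "point \<Rightarrow> point set \<Rightarrow> enat" where
  "col x A = ecount {y \<in> A. fst y = fst x}"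

definition in_zero :: "point set \<Rightarrow> enat \<Rightarrow> enat \<Rightarrow> bool" where
  "in_zero Z r c \<longleftrightarrow> (\<exists>i j. r = enat i \<and> c = enat j \<and> (i, j) \<in> Z)"

definition T_op :: "point set \<Rightarrow> point set \<Rightarrow> point set" where
  "T_op Z A = A \<union> {x. x \<notin> A \<and> \<not> in_zero Z (row x A) (col x A)}"

definition spans :: "point set \<Rightarrow> point set \<Rightarrow> bool" where
  "spans Z A \<longleftrightarrow> (\<Union>t. (T_op Z ^^ t) A) = UNIV"

definition thin :: "point set \<Rightarrow> bool" where
  "thin A \<longleftrightarrow> (\<forall>x \<in> A. (\<forall>y \<in> A. snd y = snd x \<longrightarrow> y = x) \<or>
                        (\<forall>y \<in> A. fst y = fst x \<longrightarrow> y = x))"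

text \<open>Minimal size of a finite spanning set (infinity if none exists).\<close>
definition gamma :: "point set \<Rightarrow> enat" where
  "gamma Z = (INF A \<in> {A. finite A \<and> spans Z A}. enat (card A))"

definition gamma_thin :: "point set \<Rightarrow> enat" where
  "gamma_thin Z = (INF A \<in> {A. finite A \<and> thin A \<and> spans Z A}. enat (card A))"

end

theory Submission
  imports Defs
begin

definition dc :: "point set \<Rightarrow> bool" where
  "dc Z \<longleftrightarrow> (\<forall>i j i' j'. (i,j) \<in> Z \<longrightarrow> i' \<le> i \<longrightarrow> j' \<le> j \<longrightarrow> (i',j') \<in> Z)"

lemma zero_set_dc: "zero_set Z \<Longrightarrow> dc Z"
proof -
  assume "zero_set Z"
  then obtain S where Z: "Z = (\<Union>(a, b) \<in> S. rect a b)" unfolding zero_set_def by blast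
  show "dc Z" unfolding dc_def
  proof (intro allI impI)
    fix i j i' j' assume "(i,j) \<in> Z" "i' \<le> i" "j' \<le> j"
    then obtain a b where ab: "(a,b) \<in> S" "enat i < a" "enat j < b" unfolding Z rect_def by auto
    have "enat i' < a" using ab(2) \<open>i' \<le> i\<close> by (meson enat_ord_simps(1) le_less_trans)
    moreover have "enat j' < b" using ab(3) \<open>j' \<le> j\<close> by (meson enat_ord_simps(1) le_less_trans)
    ultimately show "(i',j') \<in> Z" unfolding Z rect_def using ab(1) by blast
  qed
qed

lemma ecount_mono: "A \<subseteq> B \<Longrightarrow> ecount A \<le> ecount B"
  unfolding ecount_def by (auto intro: card_mono dest: finite_subset)

lemma ecount_inj: "inj_on f S \<Longrightarrow> ecount (f ` S) = ecount S"
  unfolding ecount_def by (simp add: finite_image_iff card_image)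

lemma row_mono: "A \<subseteq> B \<Longrightarrow> row x A \<le> row x B"
  unfolding row_def by (rule ecount_mono) auto

lemma col_mono: "A \<subseteq> B \<Longrightarrow> col x A \<le> col x B"
  unfolding col_def by (rule ecount_mono) auto

lemma in_zero_mono:
  assumes "dc Z" "in_zero Z r' c'" "r \<le> r'" "c \<le> c'"
  shows "in_zero Z r c"
proof -
  obtain i' j' where ij: "r' = enat i'" "c' = enat j'" "(i',j') \<in> Z"
    using assms(2) unfolding in_zero_def by auto
  obtain i where i: "r = enat i" using assms(3) ij(1) enat_ile by blast
  obtain j where j: "c = enat j" using assms(4) ij(2) enat_ile by blast
  have "i \<le> i'" "j \<le> j'" using assms(3,4) ij i j by auto
  then have "(i,j) \<in> Z" using assms(1) ij(3) unfolding dc_def by blast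
  then show ?thesis using i j unfolding in_zero_def by auto
qed

lemma T_infl: "A \<subseteq> T_op Z A"
  unfolding T_op_def by auto

lemma iter_mono: "(T_op Z ^^ n) A \<subseteq> (T_op Z ^^ (n + k)) A"
proof (induction k)
  case 0 then show ?case by simp
next
  case (Suc k) then show ?case using T_infl[of "(T_op Z ^^ (n + k)) A" Z] by auto
qed

lemma iter_mono': "n \<le> m \<Longrightarrow> (T_op Z ^^ n) A \<subseteq> (T_op Z ^^ m) A"
  using iter_mono[where n=n and k="m - n"] by simp

lemma T_op_image:
  assumes "bij \<phi>" "\<And>p q. snd (\<phi> p) = snd (\<phi> q) \<longleftrightarrow> snd p = snd q"
    "\<And>p q. fst (\<phi> p) = fst (\<phi> q) \<longleftrightarrow> fst p = fst q"
  shows "T_op Z (\<phi> ` B) = \<phi> ` T_op Z B"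
proof -
  have inj: "inj \<phi>" using assms(1) bij_is_inj by blast
  have r: "row (\<phi> x) (\<phi> ` B) = row x B" for x
  proof -
    have "{q \<in> \<phi> ` B. snd q = snd (\<phi> x)} = \<phi> ` {q \<in> B. snd q = snd x}"
    proof (rule set_eqI, rule iffI)
      fix y assume "y \<in> {q \<in> \<phi> ` B. snd q = snd (\<phi> x)}"
      then obtain y' where "y' \<in> B" "y = \<phi> y'" "snd (\<phi> y') = snd (\<phi> x)" by auto
      then show "y \<in> \<phi> ` {q \<in> B. snd q = snd x}" using assms(2)[of y' x] by auto
    next
      fix y assume "y \<in> \<phi> ` {q \<in> B. snd q = snd x}"
      then obtain y' where "y' \<in> B" "y = \<phi> y'" "snd y' = snd x" by auto
      then show "y \<in> {q \<in> \<phi> ` B. snd q = snd (\<phi> x)}" using assms(2)[of y' x] by auto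
    qed
    then show ?thesis unfolding row_def using ecount_inj[OF inj_on_subset[OF inj subset_UNIV]] by simp
  qed
  have c: "col (\<phi> x) (\<phi> ` B) = col x B" for x
  proof -
    have "{q \<in> \<phi> ` B. fst q = fst (\<phi> x)} = \<phi> ` {q \<in> B. fst q = fst x}"
    proof (rule set_eqI, rule iffI)
      fix y assume "y \<in> {q \<in> \<phi> ` B. fst q = fst (\<phi> x)}"
      then obtain y' where "y' \<in> B" "y = \<phi> y'" "fst (\<phi> y') = fst (\<phi> x)" by auto
      then show "y \<in> \<phi> ` {q \<in> B. fst q = fst x}" using assms(3)[of y' x] by auto
    next
      fix y assume "y \<in> \<phi> ` {q \<in> B. fst q = fst x}"
      then obtain y' where "y' \<in> B" "y = \<phi> y'" "fst y' = fst x" by auto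
      then show "y \<in> {q \<in> \<phi> ` B. fst q = fst (\<phi> x)}" using assms(3)[of y' x] by auto
    qed
    then show ?thesis unfolding col_def using ecount_inj[OF inj_on_subset[OF inj subset_UNIV]] by simp
  qed
  show ?thesis
  proof (rule set_eqI)
    fix x
    obtain x' where x: "x = \<phi> x'" using assms(1) by (metis bij_pointE)
    have m: "\<phi> x' \<in> \<phi> ` S \<longleftrightarrow> x' \<in> S" for S using inj by (simp add: inj_image_mem_iff)
    show "x \<in> T_op Z (\<phi> ` B) \<longleftrightarrow> x \<in> \<phi> ` T_op Z B"
      unfolding x m T_op_def using r c m by simp
  qed
qed

lemma iter_image:
  assumes "bij \<phi>" "\<And>p q. snd (\<phi> p) = snd (\<phi> q) \<longleftrightarrow> snd p = snd q"
    "\<And>p q. fst (\<phi> p) = fst (\<phi> q) \<longleftrightarrow> fst p = fst q"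
  shows "(T_op Z ^^ t) (\<phi> ` A) = \<phi> ` (T_op Z ^^ t) A"
  by (induction t) (simp_all add: T_op_image[OF assms])

lemma row_swap: "row (prod.swap p) (prod.swap ` B) = col p B"
proof -
  have "{q \<in> prod.swap ` B. snd q = snd (prod.swap p)} = prod.swap ` {q \<in> B. fst q = fst p}"
    by force
  then show ?thesis unfolding row_def col_def by (simp add: ecount_inj)
qed

lemma col_swap: "col (prod.swap p) (prod.swap ` B) = row p B"
proof -
  have "{q \<in> prod.swap ` B. fst q = fst (prod.swap p)} = prod.swap ` {q \<in> B. snd q = snd p}"
    by force
  then show ?thesis unfolding row_def col_def by (simp add: ecount_inj)
qed

lemma in_zero_swap: "in_zero (prod.swap ` Z) c r = in_zero Z r c"
  unfolding in_zero_def by force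

lemma T_op_swap: "T_op (prod.swap ` Z) (prod.swap ` B) = prod.swap ` T_op Z B"
proof (rule set_eqI)
  fix x :: point
  obtain x' where x: "x = prod.swap x'" by (metis swap_swap)
  have m: "prod.swap x' \<in> prod.swap ` S \<longleftrightarrow> x' \<in> S" for S by (simp add: inj_image_mem_iff)
  show "x \<in> T_op (prod.swap ` Z) (prod.swap ` B) \<longleftrightarrow> x \<in> prod.swap ` T_op Z B"
    unfolding x m T_op_def by (simp add: row_swap col_swap in_zero_swap m)
qed

lemma iter_swap: "(T_op (prod.swap ` Z) ^^ t) (prod.swap ` A) = prod.swap ` (T_op Z ^^ t) A"
  by (induction t) (simp_all add: T_op_swap)

lemma spans_swap: "spans Z A \<Longrightarrow> spans (prod.swap ` Z) (prod.swap ` A)"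
  unfolding spans_def iter_swap
  by (metis image_UN surj_swap)

lemma thin_swap: "thin A \<Longrightarrow> thin (prod.swap ` A)"
  unfolding thin_def by auto

lemma dc_swap: "dc Z \<Longrightarrow> dc (prod.swap ` Z)"
  unfolding dc_def by force



lemma dc_restrict_snd: "dc Z \<Longrightarrow> dc {z \<in> Z. snd z < k}"
  unfolding dc_def by force

lemma col_step:
  assumes dc: "dc Z1" and fin: "finite Z1" and le: "\<forall>z\<in>Z1. snd z \<le> b"
    and finA: "finite A" and sp: "spans {z\<in>Z1. snd z < b} A"
  shows "\<exists>E. finite E \<and> A \<inter> E = {} \<and> card E = card {z\<in>Z1. snd z = b} \<and>
             spans Z1 (A \<union> E) \<and> (thin A \<longrightarrow> thin (A \<union> E))"
proof -
  define w where "w = card {z\<in>Z1. snd z = b}"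
  have wb: "(w,b) \<notin> Z1"
  proof
    assume wZ: "(w,b) \<in> Z1"
    have sub: "(\<lambda>i. (i,b)) ` {..w} \<subseteq> {z\<in>Z1. snd z = b}"
      using dc wZ unfolding dc_def by auto
    have "card ((\<lambda>i. (i,b)) ` {..w}) \<le> w"
      using card_mono[OF _ sub] fin unfolding w_def by simp
    moreover have "card ((\<lambda>i. (i,b)) ` {..w}) = Suc w"
      by (subst card_image) (auto simp: inj_on_def)
    ultimately show False by simp
  qed
  have "finite (fst ` A \<union> snd ` A)" using finA by simp
  then obtain N where N0: "\<forall>n\<in>fst ` A \<union> snd ` A. n < N"
    using finite_nat_set_iff_bounded by blast
  then have N: "\<forall>q\<in>A. fst q < N \<and> snd q < N" by auto
  define H where "H = (\<lambda>i. (N+i, N)) ` {..<w}"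
  have finH: "finite H" unfolding H_def by simp
  have cardH: "card H = w" unfolding H_def by (subst card_image) (auto simp: inj_on_def)
  have disj: "A \<inter> H = {}" unfolding H_def using N by auto
  have Hline: "\<forall>q\<in>H. snd q = N" unfolding H_def by auto
  define Z0 where "Z0 = {z\<in>Z1. snd z < b}"
  define B where "B t = (T_op Z0 ^^ t) A" for t
  define D where "D s = (T_op Z1 ^^ s) (A \<union> H)" for s
  have DSuc: "D (Suc s) = T_op Z1 (D s)" for s unfolding D_def by simp
  have Dmono: "s \<le> s' \<Longrightarrow> D s \<subseteq> D s'" for s s' unfolding D_def by (rule iter_mono')
  have HD: "H \<subseteq> D s" for s using Dmono[of 0 s] unfolding D_def by auto
  have sym: "(u,y') \<in> B t" if uN: "(u,N) \<in> B t" and y': "N \<le> y'" for t u y'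
  proof -
    define \<sigma> where "\<sigma> n = (if n = N then y' else if n = y' then N else n)" for n
    define \<phi> :: "point \<Rightarrow> point" where "\<phi> p = (fst p, \<sigma> (snd p))" for p
    have ss: "\<sigma> (\<sigma> n) = n" for n unfolding \<sigma>_def by auto
    have pp: "\<phi> (\<phi> p) = p" for p unfolding \<phi>_def using ss by simp
    have bij: "bij \<phi>" using pp by (rule involuntory_imp_bij)
    have s1: "snd (\<phi> p) = snd (\<phi> q) \<longleftrightarrow> snd p = snd q" for p q
      unfolding \<phi>_def by (metis snd_conv ss)
    have f1: "fst (\<phi> p) = fst (\<phi> q) \<longleftrightarrow> fst p = fst q" for p q
      unfolding \<phi>_def by simp
    have fixA: "\<phi> q = q" if "q \<in> A" for q
      using N that y' unfolding \<phi>_def \<sigma>_def by fastforce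
    have "\<phi> ` A = A" using fixA by (simp add: image_cong)
    then have "B t = \<phi> ` B t" unfolding B_def using iter_image[OF bij s1 f1, where Z=Z0 and t=t and A=A] by simp
    moreover have "\<phi> (u,N) = (u,y')" unfolding \<phi>_def \<sigma>_def by simp
    ultimately show ?thesis using uN by (metis image_eqI)
  qed
  have key: "B t \<subseteq> D (2*t)" for t
  proof (induction t)
    case 0 show ?case by (auto simp: B_def D_def)
  next
    case (Suc t)
    have BR: "B t \<subseteq> D (Suc (2*t))" using Suc.IH Dmono[of "2*t" "Suc (2*t)"] by auto
    have D2: "D (2 * Suc t) = T_op Z1 (D (Suc (2*t)))" using DSuc by simp
    show ?case
    proof
      fix y assume "y \<in> B (Suc t)"
      then have yT: "y \<in> T_op Z0 (B t)" by (simp add: B_def)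
      show "y \<in> D (2 * Suc t)"
      proof (cases "y \<in> B t")
        case True then show ?thesis using Suc.IH Dmono[of "2*t" "2*Suc t"] by auto
      next
        case False
        then have nz0: "\<not> in_zero Z0 (row y (B t)) (col y (B t))" using yT unfolding T_op_def by auto
        show ?thesis unfolding D2
        proof (cases "in_zero Z1 (row y (B t)) (col y (B t))")
          case False
          then have "\<not> in_zero Z1 (row y (D (Suc (2*t)))) (col y (D (Suc (2*t))))"
            using in_zero_mono[OF dc] row_mono[OF BR] col_mono[OF BR] by blast
          then show "y \<in> T_op Z1 (D (Suc (2*t)))" unfolding T_op_def by auto
        next
          case True
          then obtain r c where rc: "row y (B t) = enat r" "col y (B t) = enat c" "(r,c)\<in>Z1"
            unfolding in_zero_def by auto
          have "(r,c) \<notin> Z0" using nz0 rc unfolding in_zero_def by auto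
          then have cb: "c = b" using le rc(3) unfolding Z0_def by force
          define p where "p = (fst y, N)"
          define S where "S = {q\<in>B t. fst q = fst y}"
          have colS: "ecount S = enat b" using rc(2) cb unfolding S_def col_def by simp
          have finS: "finite S" using colS unfolding ecount_def by (auto split: if_splits)
          have cardS: "card S = b" using colS finS unfolding ecount_def by simp
          have pD: "p \<in> D (Suc (2*t))"
          proof (cases "p \<in> H")
            case True then show ?thesis using HD by auto
          next
            case False
            have "H \<subseteq> {q\<in>D (2*t). snd q = snd p}" using HD Hline unfolding p_def by auto
            then have "ecount H \<le> row p (D (2*t))" unfolding row_def by (rule ecount_mono)
            then have r1: "enat w \<le> row p (D (2*t))" using finH cardH unfolding ecount_def by simp
            have "S \<subseteq> {q\<in>D (2*t). fst q = fst p}" using Suc.IH unfolding S_def p_def by auto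
            then have "ecount S \<le> col p (D (2*t))" unfolding col_def by (rule ecount_mono)
            then have c1: "enat b \<le> col p (D (2*t))" using colS by simp
            have "\<not> in_zero Z1 (enat w) (enat b)" using wb unfolding in_zero_def by simp
            then have "\<not> in_zero Z1 (row p (D (2*t))) (col p (D (2*t)))"
              using in_zero_mono[OF dc _ r1 c1] by blast
            then show ?thesis unfolding DSuc T_op_def by auto
          qed
          show "y \<in> T_op Z1 (D (Suc (2*t)))"
          proof (cases "y = p")
            case True then show ?thesis using pD T_infl by blast
          next
            case False
            have pB: "p \<notin> B t"
            proof
              assume "p \<in> B t"
              then have "\<forall>y'\<in>{N..}. (fst y, y') \<in> B t" using sym unfolding p_def by auto
              then have "(\<lambda>y'. (fst y, y')) ` {N..} \<subseteq> S" unfolding S_def by auto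
              moreover have "infinite ((\<lambda>y'. (fst y, y')) ` {N..})"
                using infinite_Ici[of N] finite_imageD[of "\<lambda>y'. (fst y, y')" "{N..}"]
                by (auto simp: inj_on_def)
              ultimately show False using finS finite_subset by blast
            qed
            have "insert p S \<subseteq> {q\<in>D (Suc (2*t)). fst q = fst y}"
              using BR pD unfolding S_def p_def by auto
            then have "ecount (insert p S) \<le> col y (D (Suc (2*t)))" unfolding col_def by (rule ecount_mono)
            moreover have "ecount (insert p S) = enat (Suc b)"
              using finS cardS pB unfolding ecount_def S_def by simp
            ultimately have c2: "enat (Suc b) \<le> col y (D (Suc (2*t)))" by simp
            have "\<not> in_zero Z1 (row y (D (Suc (2*t)))) (enat (Suc b))"
              using le unfolding in_zero_def by force
            then have "\<not> in_zero Z1 (row y (D (Suc (2*t)))) (col y (D (Suc (2*t))))"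
              using in_zero_mono[OF dc _ order_refl c2] by blast
            then show ?thesis unfolding T_op_def by auto
          qed
        qed
      qed
    qed
  qed
  have spH: "spans Z1 (A \<union> H)"
  proof -
    have "UNIV = (\<Union>t. B t)" using sp unfolding spans_def B_def Z0_def by simp
    also have "\<dots> \<subseteq> (\<Union>s. D s)" using key by blast
    finally show ?thesis unfolding spans_def D_def by blast
  qed
  have thinH: "thin A \<longrightarrow> thin (A \<union> H)"
  proof
    assume tA: "thin A"
    show "thin (A \<union> H)" unfolding thin_def
    proof
      fix x assume x: "x \<in> A \<union> H"
      show "(\<forall>y\<in>A \<union> H. snd y = snd x \<longrightarrow> y = x) \<or> (\<forall>y\<in>A \<union> H. fst y = fst x \<longrightarrow> y = x)"
      proof (cases "x \<in> A")
        case True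
        then have xN: "fst x < N" "snd x < N" using N by auto
        have "\<forall>y\<in>H. snd y \<noteq> snd x \<and> fst y \<noteq> fst x" using xN unfolding H_def by auto
        then show ?thesis using tA True unfolding thin_def by blast
      next
        case False
        then obtain i where i: "x = (N+i, N)" using x unfolding H_def by auto
        have "\<forall>y\<in>A \<union> H. fst y = fst x \<longrightarrow> y = x" using N i unfolding H_def by auto
        then show ?thesis by blast
      qed
    qed
  qed
  show ?thesis using finH disj cardH spH thinH unfolding w_def by blast
qed


lemma col_iter:
  assumes dc: "dc Z" and fin: "finite Z"
  shows "finite A \<Longrightarrow> spans {z\<in>Z. snd z < b} A \<Longrightarrow>
    \<exists>E. finite E \<and> A \<inter> E = {} \<and> card E = card {z\<in>Z. b \<le> snd z \<and> snd z < b + n} \<and>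
        spans {z\<in>Z. snd z < b + n} (A \<union> E) \<and> (thin A \<longrightarrow> thin (A \<union> E))"
proof (induction n)
  case 0
  have "{z\<in>Z. b \<le> snd z \<and> snd z < b} = {}" by auto
  then show ?case using 0 by (intro exI[of _ "{}"]) (auto simp: card_eq_0_iff)
next
  case (Suc n)
  then obtain E where E: "finite E" "A \<inter> E = {}" "card E = card {z\<in>Z. b \<le> snd z \<and> snd z < b + n}"
    "spans {z\<in>Z. snd z < b + n} (A \<union> E)" "thin A \<longrightarrow> thin (A \<union> E)" by blast
  define Z1 where "Z1 = {z\<in>Z. snd z < b + Suc n}"
  have dc1: "dc Z1" unfolding Z1_def using dc by (rule dc_restrict_snd)
  have fin1: "finite Z1" unfolding Z1_def using fin by simp
  have le1: "\<forall>z\<in>Z1. snd z \<le> b + n" unfolding Z1_def by auto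
  have eq0: "{z\<in>Z1. snd z < b + n} = {z\<in>Z. snd z < b + n}" unfolding Z1_def by auto
  obtain E' where E': "finite E'" "(A \<union> E) \<inter> E' = {}" "card E' = card {z\<in>Z1. snd z = b + n}"
    "spans Z1 (A \<union> E \<union> E')" "thin (A \<union> E) \<longrightarrow> thin (A \<union> E \<union> E')"
    using col_step[OF dc1 fin1 le1, of "A \<union> E"] Suc.prems E(1,4) eq0 by auto
  have split: "{z\<in>Z. b \<le> snd z \<and> snd z < b + Suc n} =
      {z\<in>Z. b \<le> snd z \<and> snd z < b + n} \<union> {z\<in>Z1. snd z = b + n}"
    unfolding Z1_def by auto
  have cardu: "card {z\<in>Z. b \<le> snd z \<and> snd z < b + Suc n} =
      card {z\<in>Z. b \<le> snd z \<and> snd z < b + n} + card {z\<in>Z1. snd z = b + n}"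
    unfolding split by (rule card_Un_disjoint) (use fin fin1 in auto)
  have "card (E \<union> E') = card E + card E'" using E(1) E'(1) E'(2) by (intro card_Un_disjoint) auto
  then show ?case using E E' cardu unfolding Z1_def
    by (intro exI[of _ "E \<union> E'"]) (auto simp: Un_assoc)
qed

lemma col_full:
  assumes dc: "dc Z" and fin: "finite Z" and finA: "finite A"
    and sp: "spans {z\<in>Z. enat (snd z) < b} A"
  shows "\<exists>E. finite E \<and> A \<inter> E = {} \<and> card E = card (Z - {z\<in>Z. enat (snd z) < b}) \<and>
         spans Z (A \<union> E) \<and> (thin A \<longrightarrow> thin (A \<union> E))"
proof (cases b)
  case infinity
  then have "{z\<in>Z. enat (snd z) < b} = Z" by auto
  then show ?thesis using sp by (intro exI[of _ "{}"]) simp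
next
  case (enat b0)
  obtain M where M: "\<forall>z\<in>Z. snd z < M"
    using fin finite_nat_set_iff_bounded[of "snd ` Z"] by auto
  have e1: "{z\<in>Z. enat (snd z) < b} = {z\<in>Z. snd z < b0}" using enat by auto
  have e2: "{z\<in>Z. snd z < b0 + M} = Z" using M by auto
  have e3: "{z\<in>Z. b0 \<le> snd z \<and> snd z < b0 + M} = Z - {z\<in>Z. enat (snd z) < b}"
    using M enat by auto
  show ?thesis using col_iter[OF dc fin finA, of b0 M] sp e1 e2 e3 by simp
qed

lemma row_full:
  assumes dc: "dc Z" and fin: "finite Z" and finA: "finite A"
    and sp: "spans {z\<in>Z. enat (fst z) < a} A"
  shows "\<exists>E. finite E \<and> A \<inter> E = {} \<and> card E = card (Z - {z\<in>Z. enat (fst z) < a}) \<and>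
         spans Z (A \<union> E) \<and> (thin A \<longrightarrow> thin (A \<union> E))"
proof -
  let ?s = "prod.swap :: point \<Rightarrow> point"
  have img: "?s ` {z\<in>Z. enat (fst z) < a} = {z\<in>?s ` Z. enat (snd z) < a}" by force
  have sp': "spans {z\<in>?s ` Z. enat (snd z) < a} (?s ` A)" using spans_swap[OF sp] img by simp
  obtain E where E: "finite E" "?s ` A \<inter> E = {}"
     "card E = card (?s ` Z - {z\<in>?s ` Z. enat (snd z) < a})"
     "spans (?s ` Z) (?s ` A \<union> E)" "thin (?s ` A) \<longrightarrow> thin (?s ` A \<union> E)"
    using col_full[OF dc_swap[OF dc] _ _ sp'] fin finA by auto
  have ss: "?s ` ?s ` X = X" for X :: "point set" by (simp add: image_image)
  have u: "?s ` (?s ` A \<union> E) = A \<union> ?s ` E" by (simp add: image_Un ss)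
  have sp2: "spans Z (A \<union> ?s ` E)" using spans_swap[OF E(4)] u ss by simp
  have "?s ` Z - {z\<in>?s ` Z. enat (snd z) < a} = ?s ` (Z - {z\<in>Z. enat (fst z) < a})" by force
  then have c: "card E = card (Z - {z\<in>Z. enat (fst z) < a})" using E(3)
    by (simp add: card_image)
  have d: "A \<inter> ?s ` E = {}" using E(2) by force
  have t: "thin A \<longrightarrow> thin (A \<union> ?s ` E)" using E(5) thin_swap u by metis
  show ?thesis using E(1) c d sp2 t card_image[of ?s E] by (intro exI[of _ "?s ` E"]) auto
qed

lemma inf_shift:
  assumes "\<forall>A'\<in>S'. \<exists>A\<in>S. card A = card A' + k"
  shows "(INF A\<in>S. enat (card A)) \<le> (INF A\<in>S'. enat (card A)) + enat k"
proof (cases "S' = {}")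
  case True then show ?thesis by (simp add: Inf_enat_def)
next
  case False
  let ?V = "(\<lambda>A. enat (card A)) ` S'"
  have "Inf ?V \<in> ?V" using False unfolding Inf_enat_def by (auto intro: LeastI)
  then obtain A' where A': "A' \<in> S'" "Inf ?V = enat (card A')" by auto
  then obtain A where A: "A \<in> S" "card A = card A' + k" using assms by blast
  have "(INF A\<in>S. enat (card A)) \<le> enat (card A)" using A(1) by (rule INF_lower)
  then show ?thesis using A A' by simp
qed

theorem mainTheorem8:
  fixes Z :: "point set" and a b :: enat
  assumes "zero_set Z" and "finite Z" and "1 \<le> a" and "1 \<le> b"
  shows "(\<forall>A'. finite A' \<and> spans (Z \<inter> rect a b) A' \<longrightarrow>
            (\<exists>A. A' \<subseteq> A \<and> finite A \<and> spans Z A \<and>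
                 card A = card A' + card (Z - rect a b) \<and> (thin A' \<longrightarrow> thin A)))
       \<and> gamma Z \<le> gamma (Z \<inter> rect a b) + enat (card (Z - rect a b))
       \<and> gamma_thin Z \<le> gamma_thin (Z \<inter> rect a b) + enat (card (Z - rect a b))"
proof -
  have dc: "dc Z" using assms(1) by (rule zero_set_dc)
  define Za where "Za = {z\<in>Z. enat (fst z) < a}"
  have dca: "dc Za" unfolding dc_def
  proof (intro allI impI)
    fix i j i' j' assume h: "(i,j) \<in> Za" "i' \<le> i" "j' \<le> j"
    then have "(i',j') \<in> Z" using dc unfolding dc_def Za_def by auto
    moreover have "enat i < a" using h(1) unfolding Za_def by simp
    then have "enat i' < a" using h(2) by (meson enat_ord_simps(1) le_less_trans)
    ultimately show "(i',j') \<in> Za" unfolding Za_def by simp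
  qed
  have fina: "finite Za" unfolding Za_def using assms(2) by simp
  have zr: "Z \<inter> rect a b = {z\<in>Za. enat (snd z) < b}" unfolding Za_def rect_def by auto
  have ZaZ: "Za \<subseteq> Z" unfolding Za_def by auto
  have c: "card (Z - rect a b) = card (Za - {z\<in>Za. enat (snd z) < b}) + card (Z - Za)"
  proof -
    have "Z - rect a b = (Za - {z\<in>Za. enat (snd z) < b}) \<union> (Z - Za)"
      using ZaZ zr by blast
    moreover have "card ((Za - {z\<in>Za. enat (snd z) < b}) \<union> (Z - Za)) =
      card (Za - {z\<in>Za. enat (snd z) < b}) + card (Z - Za)"
      by (rule card_Un_disjoint) (use assms(2) fina in auto)
    ultimately show ?thesis by simp
  qed
  have P: "\<exists>A. A' \<subseteq> A \<and> finite A \<and> spans Z A \<and>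
                 card A = card A' + card (Z - rect a b) \<and> (thin A' \<longrightarrow> thin A)"
    if A': "finite A'" "spans (Z \<inter> rect a b) A'" for A'
  proof -
    obtain E1 where E1: "finite E1" "A' \<inter> E1 = {}" "card E1 = card (Za - {z\<in>Za. enat (snd z) < b})"
      "spans Za (A' \<union> E1)" "thin A' \<longrightarrow> thin (A' \<union> E1)"
      using col_full[OF dca fina A'(1), of b] A'(2) zr by metis
    obtain E2 where E2: "finite E2" "(A' \<union> E1) \<inter> E2 = {}" "card E2 = card (Z - Za)"
      "spans Z (A' \<union> E1 \<union> E2)" "thin (A' \<union> E1) \<longrightarrow> thin (A' \<union> E1 \<union> E2)"
      using row_full[OF dc assms(2), of "A' \<union> E1" a] A'(1) E1(1,4) unfolding Za_def by auto
    have "card (A' \<union> E1 \<union> E2) = card (A' \<union> E1) + card E2"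
      using E2 A'(1) E1(1) by (intro card_Un_disjoint) auto
    moreover have "card (A' \<union> E1) = card A' + card E1"
      using E1 A'(1) by (intro card_Un_disjoint) auto
    ultimately show ?thesis using E1 E2 A'(1) c
      by (intro exI[of _ "A' \<union> E1 \<union> E2"]) auto
  qed
  have g1: "gamma Z \<le> gamma (Z \<inter> rect a b) + enat (card (Z - rect a b))"
    unfolding gamma_def by (rule inf_shift) (use P in blast)
  have g2: "gamma_thin Z \<le> gamma_thin (Z \<inter> rect a b) + enat (card (Z - rect a b))"
    unfolding gamma_thin_def by (rule inf_shift) (use P in blast)
  show ?thesis using P g1 g2 by blast
qed

end
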